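(* Let $d\ge 2$ be an integer, $D\in\{d,-d\}$, and let $a_1,\dots,a_d$ be integers forming a complete system of residues modulo $d$, so that $S=\{a_i \bmod D : 1\le i\le d\}$ is an exact covering system. Then every integer $n$ can be expressed as $n=\sum_{j=0}^k b_jD^j$ with $b_j\in\{a_1,\dots,a_d\}$ for some $k\in\mathbb{N}$ if and only if $G_S$ is (weakly) connected and its unique directed cycle contains $0$. Moreover, in that case the representation is unique up to leading copies of the block of digits of the cycle: if the cycle is $0=c_0\to c_1\to\cdots\to c_L=0$ with $c_t=Dc_{t-1}+e_t$, $e_t\in\{a_1,\dots,a_d\}$, then any two representations $\sum_{j=0}^k b_jD^j$ of the same integer $n$ differ only in that one is obtained from the other by prepending, in the most significant positions, some number of copies of the digit string $e_1e_2\cdots e_L$ (written most significant digit first).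
   Context: For $D=\pm d$, $n\equiv a \bmod D$ means $n\equiv a \bmod d$. The exact covering system digraph $G_S=G(Dn+a_1,\dots,Dn+a_d)$ has vertex set $\mathbb{Z}$ and edges $(n,Dn+a_i)$ for all $n\in\mathbb{Z}$ and $1\le i\le d$ (the $a_i$ are considered as specific representatives). Connectedness refers to the underlying undirected graph; cycles are directed cycles, loops included. Every vertex has indegree one, and when $G_S$ is connected it has exactly one directed cycle. Writing a representation as the digit string $b_kb_{k-1}\cdots b_0$, prepending a block $e_1\cdots e_L$ produces the string $e_1\cdots e_Lb_k\cdots b_0$. *)

theory Defs
  imports Main
begin

text \<open>Digit strings are lists written most significant digit first:
  the list [b_k, ..., b_0] has value sum_{j=0}^k b_j D^j.\<close>
definition digits_value :: "int \<Rightarrow> int list \<Rightarrow> int" where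
  "digits_value D bs = (\<Sum>j<length bs. rev bs ! j * D ^ j)"

text \<open>bs is a representation of n in base D with digits from A (k in N, so at least one digit).\<close>
definition is_rep :: "int \<Rightarrow> int set \<Rightarrow> int \<Rightarrow> int list \<Rightarrow> bool" where
  "is_rep D A n bs \<longleftrightarrow> bs \<noteq> [] \<and> set bs \<subseteq> A \<and> digits_value D bs = n"

definition cs_edges :: "int \<Rightarrow> int set \<Rightarrow> (int \<times> int) set" where
  "cs_edges D A = {(n, D * n + a) | n a. a \<in> A}"

definition weakly_connected :: "('v \<times> 'v) set \<Rightarrow> bool" where
  "weakly_connected E \<longleftrightarrow> (\<forall>x y. (x, y) \<in> (E \<union> E\<inverse>)\<^sup>*)"

text \<open>A directed cycle (loops allowed): distinct vertices c_0,...,c_{L-1}, L >= 1,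
  with edges c_i -> c_{i+1 mod L}.\<close>
definition dir_cycle :: "('v \<times> 'v) set \<Rightarrow> 'v list \<Rightarrow> bool" where
  "dir_cycle E cs \<longleftrightarrow> cs \<noteq> [] \<and> distinct cs \<and>
     (\<forall>i < length cs. (cs ! i, cs ! ((i + 1) mod length cs)) \<in> E)"

end

theory Submission
  imports Defs
begin

locale ecs =
  fixes d :: nat and D :: int and A :: "int set"
  assumes d2: "d \<ge> 2"
    and Dd: "D = int d \<or> D = - int d"
    and cardA: "card A = d"
    and res: "(\<lambda>x. x mod int d) ` A = {0..<int d}"
begin

lemma finA: "finite A" by (rule card_ge_0_finite) (use cardA d2 in simp)

lemma injA: "inj_on (\<lambda>x. x mod int d) A"
  by (rule eq_card_imp_inj_on[OF finA]) (simp add: res cardA)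

lemma exA: "\<exists>a\<in>A. a mod int d = m mod int d"
proof -
  have "m mod int d \<in> {0..<int d}" using d2 by simp
  then show ?thesis using res by (metis (no_types, lifting) image_iff)
qed

definition dg :: "int \<Rightarrow> int" where
  "dg m = (THE a. a \<in> A \<and> a mod int d = m mod int d)"

lemma dg: "dg m \<in> A \<and> dg m mod int d = m mod int d"
proof -
  obtain a where a: "a \<in> A" "a mod int d = m mod int d" using exA by blast
  have u: "b = a" if "b \<in> A \<and> b mod int d = m mod int d" for b
  proof -
    have bm: "b mod int d = a mod int d" using that a by simp
    have bA: "b \<in> A" using that by blast
    show ?thesis by (rule inj_onD[OF injA bm bA a(1)])
  qed
  have "(THE a. a \<in> A \<and> a mod int d = m mod int d) = a"
  proof (rule the_equality)
    show "a \<in> A \<and> a mod int d = m mod int d" using a by (rule conjI)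
  next
    fix x assume "x \<in> A \<and> x mod int d = m mod int d"
    then show "x = a" by (rule u)
  qed
  then show ?thesis using a unfolding dg_def by simp
qed

lemma dg_unique: "a \<in> A \<Longrightarrow> a mod int d = m mod int d \<Longrightarrow> dg m = a"
  using dg[of m] inj_onD[OF injA, of "dg m" a] by simp

definition par :: "int \<Rightarrow> int" where
  "par m = (m - dg m) div D"

lemma Dnz: "D \<noteq> 0" using Dd d2 by auto

lemma dvdD: "int d dvd x \<Longrightarrow> D dvd x" using Dd by auto

lemma par_eq: "D * par m + dg m = m"
proof -
  have "(m - dg m) mod int d = 0" using dg[of m] by (simp add: mod_diff_cong)
  then have "int d dvd (m - dg m)" by auto
  then have "D dvd (m - dg m)" by (rule dvdD)
  then show ?thesis unfolding par_def by simp
qed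

lemma edge_inv: assumes "y = D * x + a" "a \<in> A" shows "dg y = a \<and> par y = x"
proof -
  have "int d dvd D" using Dd by auto
  then have "int d dvd D * x" by simp
  then have "y mod int d = a mod int d" using assms(1)
    by (metis add.commute mod_mult_self2 dvd_def)
  then have "dg y = a" using dg_unique[OF assms(2)] by simp
  moreover have "par y = x" unfolding par_def using \<open>dg y = a\<close> assms(1) Dnz by simp
  ultimately show ?thesis by simp
qed

lemma edge_iff: "(x, y) \<in> cs_edges D A \<longleftrightarrow> x = par y"
proof
  assume "(x, y) \<in> cs_edges D A"
  then obtain a where "y = D * x + a" "a \<in> A" unfolding cs_edges_def by auto
  then show "x = par y" using edge_inv by simp
next
  assume "x = par y"
  then show "(x, y) \<in> cs_edges D A" unfolding cs_edges_def
    using par_eq[of y] dg[of y] by force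
qed

fun repl :: "int \<Rightarrow> nat \<Rightarrow> int list" where
  "repl n 0 = []"
| "repl n (Suc k) = repl (par n) k @ [dg n]"

lemma length_repl[simp]: "length (repl n k) = k"
  by (induction k arbitrary: n) auto

lemma dv_snoc: "digits_value D (bs @ [b]) = D * digits_value D bs + b"
proof -
  have "digits_value D (bs @ [b]) = (\<Sum>j<Suc (length bs). (b # rev bs) ! j * D ^ j)"
    unfolding digits_value_def by simp
  also have "\<dots> = b + (\<Sum>j<length bs. rev bs ! j * D ^ Suc j)"
    by (subst sum.lessThan_Suc_shift) simp
  also have "\<dots> = b + D * digits_value D bs"
    unfolding digits_value_def by (simp add: sum_distrib_left algebra_simps)
  finally show ?thesis by simp
qed

lemma rep_char:
  "set bs \<subseteq> A \<and> digits_value D bs = n \<longleftrightarrow>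
     (par ^^ length bs) n = 0 \<and> bs = repl n (length bs)"
proof (induction bs arbitrary: n rule: rev_induct)
  case Nil
  then show ?case by (auto simp: digits_value_def)
next
  case (snoc b bs)
  show ?case
  proof
    assume h: "set (bs @ [b]) \<subseteq> A \<and> digits_value D (bs @ [b]) = n"
    then have bA: "b \<in> A" and e: "n = D * digits_value D bs + b" and sA: "set bs \<subseteq> A"
      using dv_snoc by auto
    from edge_inv[OF e bA] have "dg n = b" "par n = digits_value D bs" by auto
    with snoc.IH[of "par n"] sA show "(par ^^ length (bs @ [b])) n = 0 \<and> bs @ [b] = repl n (length (bs @ [b]))"
      by (simp add: funpow_Suc_right del: funpow.simps)
  next
    assume h: "(par ^^ length (bs @ [b])) n = 0 \<and> bs @ [b] = repl n (length (bs @ [b]))"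
    then have "(par ^^ length bs) (par n) = 0" "bs = repl (par n) (length bs)" "b = dg n"
      by (auto simp: funpow_Suc_right simp del: funpow.simps)
    with snoc.IH[of "par n"] have "set bs \<subseteq> A" "digits_value D bs = par n" by auto
    then show "set (bs @ [b]) \<subseteq> A \<and> digits_value D (bs @ [b]) = n"
      using dv_snoc par_eq[of n] dg[of n] \<open>b = dg n\<close> by auto
  qed
qed

lemma is_rep_char: "is_rep D A n bs \<longleftrightarrow> bs \<noteq> [] \<and> (par ^^ length bs) n = 0 \<and> bs = repl n (length bs)"
  unfolding is_rep_def using rep_char by blast

lemma repl_add: "repl n (k + m) = repl ((par ^^ k) n) m @ repl n k"
  by (induction k arbitrary: n) (auto simp: funpow_Suc_right simp del: funpow.simps)

lemma exists_rep_iff: "(\<exists>bs. is_rep D A n bs) \<longleftrightarrow> (\<exists>k\<ge>1. (par ^^ k) n = 0)"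
  unfolding is_rep_char
proof
  assume "\<exists>bs. bs \<noteq> [] \<and> (par ^^ length bs) n = 0 \<and> bs = repl n (length bs)"
  then obtain bs :: "int list" where "bs \<noteq> []" "(par ^^ length bs) n = 0" by blast
  then show "\<exists>k\<ge>1. (par ^^ k) n = 0" by (intro exI[of _ "length bs"]) (simp add: Suc_leI)
next
  assume "\<exists>k\<ge>1. (par ^^ k) n = 0"
  then obtain k where "k \<ge> 1" "(par ^^ k) n = 0" by blast
  then show "\<exists>bs. bs \<noteq> [] \<and> (par ^^ length bs) n = 0 \<and> bs = repl n (length bs)"
    by (intro exI[of _ "repl n k"]) (auto simp flip: length_0_conv)
qed

lemma per_mult: "(par ^^ L) 0 = 0 \<Longrightarrow> (par ^^ (m * L)) 0 = 0"
  by (induction m) (auto simp: funpow_add)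

abbreviation "E \<equiv> cs_edges D A"

lemma par_edge: "(par y, y) \<in> E" using edge_iff by simp

lemma R_sym: "(a, b) \<in> (E \<union> E\<inverse>)\<^sup>* \<Longrightarrow> (b, a) \<in> (E \<union> E\<inverse>)\<^sup>*"
proof -
  assume "(a, b) \<in> (E \<union> E\<inverse>)\<^sup>*"
  then have "(b, a) \<in> ((E \<union> E\<inverse>)\<inverse>)\<^sup>*" by (rule rtrancl_converseI)
  moreover have "(E \<union> E\<inverse>)\<inverse> = E \<union> E\<inverse>" by auto
  ultimately show ?thesis by simp
qed

lemma down: "(x, (par ^^ j) x) \<in> (E \<union> E\<inverse>)\<^sup>*"
proof (induction j)
  case 0 then show ?case by simp
next
  case (Suc j)
  have "((par ^^ j) x, par ((par ^^ j) x)) \<in> E \<union> E\<inverse>" using par_edge by auto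
  with Suc show ?case by (simp add: rtrancl_into_rtrancl)
qed

lemma meet: "(x, y) \<in> (E \<union> E\<inverse>)\<^sup>* \<Longrightarrow> \<exists>i j. (par ^^ i) x = (par ^^ j) y"
proof (induction rule: rtrancl_induct)
  case base
  then show ?case by (intro exI[of _ 0]) simp
next
  case (step y z)
  then obtain i j where ij: "(par ^^ i) x = (par ^^ j) y" by blast
  from step(2) show ?case
  proof
    assume "(y, z) \<in> E"
    then have "y = par z" using edge_iff by simp
    then have "(par ^^ i) x = (par ^^ Suc j) z" using ij by (simp add: funpow_Suc_right del: funpow.simps)
    then show ?thesis by blast
  next
    assume "(y, z) \<in> E\<inverse>"
    then have "z = par y" using edge_iff by simp
    then have "(par ^^ Suc i) x = (par ^^ j) z" using ij by (simp add: funpow_swap1)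
    then show ?thesis by blast
  qed
qed

lemma reach_all:
  assumes L: "L \<ge> 1" "(par ^^ L) 0 = 0" and conn: "weakly_connected E"
  shows "\<exists>k\<ge>1. (par ^^ k) n = 0"
proof -
  have "(n, 0) \<in> (E \<union> E\<inverse>)\<^sup>*" using conn unfolding weakly_connected_def by blast
  then obtain i j where ij: "(par ^^ i) n = (par ^^ j) 0" using meet by blast
  define M where "M = (j + 1) * L"
  have "(j + 1) * 1 \<le> (j + 1) * L" using L(1) by (rule mult_le_mono2)
  then have "M \<ge> j + 1" unfolding M_def by simp
  have PM: "(par ^^ M) 0 = 0" unfolding M_def using per_mult[OF L(2)] by blast
  have "(par ^^ (i + (M - j))) n = (par ^^ (M - j)) ((par ^^ i) n)"
    by (subst add.commute) (simp add: funpow_add)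
  also have "\<dots> = (par ^^ (M - j + j)) 0" using ij by (simp add: funpow_add)
  also have "\<dots> = 0" using PM \<open>M \<ge> j + 1\<close> by simp
  finally show ?thesis using \<open>M \<ge> j + 1\<close> by (intro exI[of _ "i + (M - j)"]) auto
qed

lemma cycle_back:
  assumes cyc: "dir_cycle E cs" and "j \<le> i" "i < length cs"
  shows "(par ^^ j) (cs ! i) = cs ! (i - j)"
  using assms(2,3)
proof (induction j)
  case 0 then show ?case by simp
next
  case (Suc j)
  then have IH: "(par ^^ j) (cs ! i) = cs ! (i - j)" by simp
  let ?a = "i - Suc j"
  have "?a < length cs" "Suc ?a < length cs" using Suc by auto
  then have "(cs ! ?a, cs ! ((?a + 1) mod length cs)) \<in> E"
    using cyc unfolding dir_cycle_def by blast
  moreover have "(?a + 1) mod length cs = i - j" using Suc by simp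
  ultimately have "par (cs ! (i - j)) = cs ! ?a" using edge_iff by simp
  then show ?case using IH by simp
qed

lemma cycle_zero:
  assumes cyc: "dir_cycle E cs" and z: "0 \<in> set cs"
  shows "length cs \<ge> 1 \<and> (par ^^ length cs) 0 = 0"
proof -
  let ?L = "length cs"
  have L1: "?L \<ge> 1" using cyc unfolding dir_cycle_def by (simp add: Suc_leI)
  obtain i0 where i0: "i0 < ?L" "cs ! i0 = 0" using z by (metis in_set_conv_nth)
  have "(cs ! (?L - 1), cs ! ((?L - 1 + 1) mod ?L)) \<in> E"
    using cyc L1 unfolding dir_cycle_def by (metis diff_less less_numeral_extra(1) not_one_le_zero zero_less_iff_neq_zero)
  moreover have "?L - 1 + 1 = ?L" using L1 by linarith
  then have "(?L - 1 + 1) mod ?L = 0" by (metis mod_self)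
  ultimately have p0: "par (cs ! 0) = cs ! (?L - 1)" using edge_iff by simp
  have a: "(par ^^ i0) 0 = cs ! 0" using cycle_back[OF cyc, of i0 i0] i0 by simp
  have b: "(par ^^ (?L - 1 - i0)) (cs ! (?L - 1)) = cs ! i0"
    using cycle_back[OF cyc, of "?L - 1 - i0" "?L - 1"] i0 L1 by simp
  have "?L = (?L - 1 - i0) + Suc i0" using i0 by simp
  then have "(par ^^ ?L) 0 = (par ^^ (?L - 1 - i0)) ((par ^^ Suc i0) 0)"
    by (metis comp_apply funpow_add)
  also have "\<dots> = 0" using a b p0 i0 by simp
  finally show ?thesis using L1 by simp
qed

lemma conn_from_reach:
  assumes "\<forall>n. \<exists>k\<ge>1. (par ^^ k) n = 0"
  shows "weakly_connected E"
  unfolding weakly_connected_def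
proof (intro allI)
  fix x y
  have hx: "(x, 0) \<in> (E \<union> E\<inverse>)\<^sup>*" for x
    using assms down by metis
  show "(x, y) \<in> (E \<union> E\<inverse>)\<^sup>*" using hx[of x] R_sym[OF hx[of y]] by simp
qed

lemma cycle_from_reach:
  assumes "\<exists>k\<ge>1. (par ^^ k) 0 = 0"
  shows "\<exists>cs. dir_cycle E cs \<and> 0 \<in> set cs"
proof -
  define k where "k = (LEAST k. k \<ge> 1 \<and> (par ^^ k) 0 = 0)"
  have k: "k \<ge> 1" "(par ^^ k) 0 = 0" using LeastI_ex[OF assms] unfolding k_def by auto
  have kmin: "\<And>j. j \<ge> 1 \<Longrightarrow> j < k \<Longrightarrow> (par ^^ j) 0 \<noteq> 0"
    unfolding k_def using not_less_Least by blast
  define cs where "cs = map (\<lambda>i. (par ^^ (k - i)) 0) [0..<k]"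
  have len: "length cs = k" unfolding cs_def by simp
  have nth: "\<And>i. i < k \<Longrightarrow> cs ! i = (par ^^ (k - i)) 0" unfolding cs_def by simp
  have dist: "distinct cs"
    unfolding distinct_conv_nth len
  proof (intro allI impI)
    fix i j assume h: "i < k" "j < k" "i \<noteq> j"
    show "cs ! i \<noteq> cs ! j"
    proof
      assume eq: "cs ! i = cs ! j"
      have gen: "False" if "a < b" "b < k" "(par ^^ (k - a)) 0 = (par ^^ (k - b)) 0" for a b
      proof -
        have "(par ^^ (a + (k - a))) 0 = (par ^^ a) ((par ^^ (k - a)) 0)" by (simp add: funpow_add)
        moreover have "(par ^^ (a + (k - b))) 0 = (par ^^ a) ((par ^^ (k - b)) 0)" by (simp add: funpow_add)
        ultimately have "(par ^^ (a + (k - b))) 0 = 0" using that k by simp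
        moreover have "1 \<le> a + (k - b)" "a + (k - b) < k" using that(1,2) by linarith+
        ultimately show False using kmin[of "a + (k - b)"] by blast
      qed
      show False
      proof (cases "i < j")
        case True then show ?thesis using gen[of i j] eq nth h by simp
      next
        case False then show ?thesis using gen[of j i] eq nth h by simp
      qed
    qed
  qed
  have edges: "\<forall>i < length cs. (cs ! i, cs ! ((i + 1) mod length cs)) \<in> E"
  proof (intro allI impI)
    fix i assume i: "i < length cs"
    show "(cs ! i, cs ! ((i + 1) mod length cs)) \<in> E"
    proof (cases "i + 1 < k")
      case True
      then have "(i + 1) mod length cs = i + 1" using len by simp
      moreover have "k - i = Suc (k - (i + 1))" using True by simp
      ultimately show ?thesis using nth[of i] nth[of "i+1"] True edge_iff by simp
    next
      case False
      then have "i + 1 = k" using i len by simp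
      then have ki: "k - i = 1" by linarith
      have "(i + 1) mod length cs = 0" using len \<open>i + 1 = k\<close> by simp
      moreover have "cs ! 0 = 0" using nth[of 0] k by simp
      moreover have "cs ! i = par 0" using nth[of i] i len ki by simp
      ultimately show ?thesis using edge_iff by simp
    qed
  qed
  have "cs \<noteq> []" using len k by auto
  moreover have "0 \<in> set cs" using nth_mem[of 0 cs] nth[of 0] k len by simp
  ultimately show ?thesis using dist edges unfolding dir_cycle_def by blast
qed

lemma part1: "(\<forall>n. \<exists>bs. is_rep D A n bs) \<longleftrightarrow>
           (weakly_connected E \<and> (\<exists>cs. dir_cycle E cs \<and> 0 \<in> set cs))"
proof
  assume "\<forall>n. \<exists>bs. is_rep D A n bs"
  then have r: "\<forall>n. \<exists>k\<ge>1. (par ^^ k) n = 0" using exists_rep_iff by blast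
  then show "weakly_connected E \<and> (\<exists>cs. dir_cycle E cs \<and> 0 \<in> set cs)"
    using conn_from_reach cycle_from_reach by blast
next
  assume h: "weakly_connected E \<and> (\<exists>cs. dir_cycle E cs \<and> 0 \<in> set cs)"
  then obtain cs where "dir_cycle E cs" "0 \<in> set cs" by blast
  then have "length cs \<ge> 1" "(par ^^ length cs) 0 = 0" using cycle_zero by auto
  then show "\<forall>n. \<exists>bs. is_rep D A n bs" using reach_all h exists_rep_iff by blast
qed

lemma part2:
  assumes L1: "L \<ge> 1" and c0: "c 0 = 0" and cL: "c L = 0"
    and st: "\<forall>t\<in>{1..L}. e t \<in> A \<and> c t = D * c (t - 1) + e t"
    and inj: "inj_on c {0..<L}"
    and rb: "is_rep D A n bs" and rc: "is_rep D A n cs"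
  shows "(\<exists>m. bs = concat (replicate m (map e [1..<L+1])) @ cs) \<or>
         (\<exists>m. cs = concat (replicate m (map e [1..<L+1])) @ bs)"
proof -
  let ?blk = "map e [1..<L+1]"
  have fwd: "t \<le> L \<Longrightarrow> (par ^^ t) (c t) = 0 \<and> repl (c t) t = map e [1..<t+1]" for t
  proof (induction t)
    case 0 then show ?case using c0 by simp
  next
    case (Suc t)
    have "e (Suc t) \<in> A" "c (Suc t) = D * c t + e (Suc t)" using st Suc.prems by auto
    from edge_inv[OF this(2,1)] have "dg (c (Suc t)) = e (Suc t)" "par (c (Suc t)) = c t" by auto
    with Suc show ?case by (simp add: funpow_Suc_right del: funpow.simps)
  qed
  have PL: "(par ^^ L) 0 = 0" and RL: "repl 0 L = ?blk" using fwd[of L] cL by auto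
  have bk: "j \<le> t \<Longrightarrow> t \<le> L \<Longrightarrow> (par ^^ j) (c t) = c (t - j)" for j t
  proof (induction j)
    case 0 then show ?case by simp
  next
    case (Suc j)
    have mem: "t - j \<in> {1..L}" using Suc.prems by auto
    have "e (t - j) \<in> A" "c (t - j) = D * c (t - j - 1) + e (t - j)" using st mem by blast+
    from edge_inv[OF this(2,1)] have "par (c (t - j)) = c (t - Suc j)" by simp
    with Suc show ?case by simp
  qed
  have minp: "(par ^^ j) 0 \<noteq> 0" if "0 < j" "j < L" for j
  proof
    assume "(par ^^ j) 0 = 0"
    then have "c (L - j) = c 0" using bk[of j L] that cL c0 by simp
    moreover have "L - j \<in> {0..<L}" "0 \<in> {0..<L}" using that by auto
    ultimately have "L - j = 0" using inj unfolding inj_on_def by blast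
    then show False using that by simp
  qed
  have Rm: "repl 0 (m * L) = concat (replicate m ?blk)" for m
  proof (induction m)
    case 0 then show ?case by simp
  next
    case (Suc m)
    have "repl 0 (Suc m * L) = repl 0 (L + m * L)" by simp
    also have "\<dots> = repl 0 (m * L) @ ?blk" using repl_add[of 0 L "m * L"] PL RL by simp
    also have "\<dots> = concat (replicate m ?blk @ [?blk])" using Suc by simp
    also have "\<dots> = concat (replicate (Suc m) ?blk)" by (simp add: replicate_append_same)
    finally show ?case .
  qed
  have key: "\<exists>m. ys = concat (replicate m ?blk) @ xs"
    if x: "is_rep D A n xs" and y: "is_rep D A n ys" and le: "length xs \<le> length ys" for xs ys
  proof -
    let ?k1 = "length xs" and ?k2 = "length ys"
    have p1: "(par ^^ ?k1) n = 0" and x': "xs = repl n ?k1" using x is_rep_char by auto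
    have p2: "(par ^^ ?k2) n = 0" and y': "ys = repl n ?k2" using y is_rep_char by auto
    define q where "q = (?k2 - ?k1) div L"
    define r where "r = (?k2 - ?k1) mod L"
    have dec: "?k2 = ?k1 + (r + q * L)" unfolding q_def r_def using le by simp
    have "(par ^^ ?k2) n = (par ^^ r) ((par ^^ (q * L)) ((par ^^ ?k1) n))"
    proof -
      have dec2: "?k2 = r + (q * L + ?k1)" using dec by simp
      show ?thesis by (subst dec2) (simp only: funpow_add comp_apply)
    qed
    then have "(par ^^ r) 0 = 0" using p1 p2 per_mult[OF PL] by simp
    moreover have "r < L" unfolding r_def using L1 by simp
    ultimately have "r = 0" using minp by (cases "r = 0") auto
    then have "?k2 = ?k1 + q * L" using dec by simp
    then have "ys = repl ((par ^^ ?k1) n) (q * L) @ repl n ?k1" using y' repl_add by metis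
    then have "ys = concat (replicate q ?blk) @ xs" using p1 x' Rm by simp
    then show ?thesis by blast
  qed
  show ?thesis
  proof (cases "length bs \<le> length cs")
    case True then show ?thesis using key[OF rb rc] by blast
  next
    case False then show ?thesis using key[OF rc rb] by simp
  qed
qed

end

theorem mainTheorem9:
  fixes d :: nat and D :: int and A :: "int set"
  assumes "d \<ge> 2"
    and "D = int d \<or> D = - int d"
    and "card A = d"
    and "(\<lambda>x. x mod int d) ` A = {0..<int d}"
  shows "((\<forall>n. \<exists>bs. is_rep D A n bs) \<longleftrightarrow>
           (weakly_connected (cs_edges D A) \<and>
            (\<exists>cs. dir_cycle (cs_edges D A) cs \<and> 0 \<in> set cs)))
       \<and> ((weakly_connected (cs_edges D A) \<and>
            (\<exists>cs. dir_cycle (cs_edges D A) cs \<and> 0 \<in> set cs)) \<longrightarrow>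
          (\<forall>L e c. L \<ge> 1 \<and> c 0 = 0 \<and> c L = 0 \<and>
              (\<forall>t\<in>{1..L}. e t \<in> A \<and> c t = D * c (t - 1) + e t) \<and>
              inj_on c {0..<L} \<longrightarrow>
             (\<forall>n bs cs. is_rep D A n bs \<and> is_rep D A n cs \<longrightarrow>
                (\<exists>m. bs = concat (replicate m (map e [1..<L+1])) @ cs) \<or>
                (\<exists>m. cs = concat (replicate m (map e [1..<L+1])) @ bs))))"
proof -
  interpret ecs d D A using assms by unfold_locales
  show ?thesis using part1 part2 by blast
qed

end
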